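(* There is an absolute constant $C$ such that the following holds. Let $\sigma\in(0,1]$ and let $\mathcal{I}$ be a finite set of closed intervals on the real line that all contain a common point $p$. If $\mathcal{I}$ is $\sigma$-exposed, then $|\mathcal{I}|\le C/\sigma^2$.
   Context: For sets $X, Y\subseteq\mathbb{R}^d$ and $\sigma>0$, $X$ $\sigma$-shadows $Y$ if $\max_{q\in Y} \mathrm{dist}(q, X) \le \sigma\cdot \mathrm{diam}(Y)$, where $\mathrm{dist}(q,X)=\min_{p\in X}\|q-p\|$. A set of objects is $\sigma$-exposed if no object in the set $\sigma$-shadows another (distinct) object of the set. For intervals, $I=[\ell,r]$ $\sigma$-shadows $I'$ iff $I'\subseteq[\ell-\sigma|I'|,\, r+\sigma|I'|]$, where $|I'|$ is the length of $I'$. *)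

theory Defs
  imports "HOL-Analysis.Analysis"
begin

text \<open>X sigma-shadows Y: every point of Y is within sigma * diam Y of X.
  For the compact sets considered here, infdist is attained, so it is the min in the paper.\<close>
definition shadows :: "real \<Rightarrow> 'a::metric_space set \<Rightarrow> 'a set \<Rightarrow> bool" where
  "shadows \<sigma> X Y \<longleftrightarrow> (\<forall>q\<in>Y. infdist q X \<le> \<sigma> * diameter Y)"

definition exposed :: "real \<Rightarrow> 'a::metric_space set set \<Rightarrow> bool" where
  "exposed \<sigma> S \<longleftrightarrow> (\<forall>X\<in>S. \<forall>Y\<in>S. X \<noteq> Y \<longrightarrow> \<not> shadows \<sigma> X Y)"

definition closed_interval :: "real set \<Rightarrow> bool" where
  "closed_interval I \<longleftrightarrow> (\<exists>l r. l \<le> r \<and> I = {l..r})"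

end

theory Submission
  imports Defs
begin

lemma key:
  fixes A :: "'x set" and a b :: "'x \<Rightarrow> real" and \<sigma> :: real
  assumes fin: "finite A" and s: "0 < \<sigma>"
    and nn: "\<And>x. x \<in> A \<Longrightarrow> 0 \<le> a x \<and> 0 \<le> b x \<and> b x \<le> a x"
    and pc: "\<And>x y. x \<in> A \<Longrightarrow> y \<in> A \<Longrightarrow> x \<noteq> y \<Longrightarrow>
               a y > a x + \<sigma> * (a y + b y) \<or> b y > b x + \<sigma> * (a y + b y)"
  shows "real (card A) \<le> 1 / \<sigma> + 1"
proof (cases "A = {}")
  case True then show ?thesis using s by simp
next
  case False
  obtain x0 where x0: "x0 \<in> A" "\<And>y. y \<in> A \<Longrightarrow> a x0 \<le> a y"
  proof -
    have "Min (a ` A) \<in> a ` A" using fin False by (intro Min_in) auto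
    then obtain x0 where "x0 \<in> A" "a x0 = Min (a ` A)" by auto
    moreover have "\<And>y. y \<in> A \<Longrightarrow> Min (a ` A) \<le> a y" using fin by auto
    ultimately show ?thesis using that by metis
  qed
  have sep: "\<bar>b y - b z\<bar> > \<sigma> * a x0" if "y \<in> A" "z \<in> A" "y \<noteq> z" for y z
  proof -
    have 1: "a z > a y + \<sigma> * (a z + b z) \<or> b z > b y + \<sigma> * (a z + b z)" using pc that by blast
    have 2: "a y > a z + \<sigma> * (a y + b y) \<or> b y > b z + \<sigma> * (a y + b y)" using pc[OF that(2,1)] that(3) by auto
    have p1: "\<sigma> * (a z + b z) \<ge> \<sigma> * a x0" using s nn[OF that(2)] x0(2)[OF that(2)]
      by (intro mult_left_mono) auto
    have p2: "\<sigma> * (a y + b y) \<ge> \<sigma> * a x0" using s nn[OF that(1)] x0(2)[OF that(1)]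
      by (intro mult_left_mono) auto
    have p3: "\<sigma> * (a z + b z) \<ge> 0" "\<sigma> * (a y + b y) \<ge> 0"
      using s nn[OF that(1)] nn[OF that(2)] by auto
    show ?thesis using 1 2 p1 p2 p3 by linarith
  qed
  have ble: "b y \<le> b x0" if "y \<in> A" for y
  proof (cases "y = x0")
    case False
    have "a x0 > a y + \<sigma> * (a x0 + b x0) \<or> b x0 > b y + \<sigma> * (a x0 + b x0)"
      using pc[OF that x0(1)] False by auto
    moreover have "\<sigma> * (a x0 + b x0) \<ge> 0" using s nn[OF x0(1)] by auto
    ultimately show ?thesis using x0(2)[OF that] by linarith
  qed simp
  show ?thesis
  proof (cases "a x0 = 0")
    case True
    have "A \<subseteq> {x0}"
    proof
      fix y assume y: "y \<in> A"
      show "y \<in> {x0}"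
      proof (rule ccontr)
        assume "y \<notin> {x0}"
        then have "\<bar>b y - b x0\<bar> > 0" using sep[OF y x0(1)] True by auto
        moreover have "b x0 = 0" using nn[OF x0(1)] True by auto
        moreover have "b y = 0" using nn[OF y] ble[OF y] \<open>b x0 = 0\<close> by auto
        ultimately show False by simp
      qed
    qed
    then have "card A \<le> 1" using card_mono[of "{x0}" A] by simp
    then have "real (card A) \<le> 1" by simp
    moreover have "0 < 1 / \<sigma>" using s by simp
    ultimately show ?thesis by linarith
  next
    case False
    define \<delta> where "\<delta> = \<sigma> * a x0"
    have dpos: "\<delta> > 0" using False nn[OF x0(1)] s by (simp add: \<delta>_def)
    define f where "f y = nat \<lfloor>b y / \<delta>\<rfloor>" for y
    have inj: "inj_on f A"
    proof (rule inj_onI, rule ccontr)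
      fix y z assume yz: "y \<in> A" "z \<in> A" "f y = f z" "y \<noteq> z"
      have fl: "\<lfloor>b y / \<delta>\<rfloor> = \<lfloor>b z / \<delta>\<rfloor>"
        using yz(3) nn[OF yz(1)] nn[OF yz(2)] dpos unfolding f_def
        by (simp add: nat_eq_iff2)
      have "\<bar>b y / \<delta> - b z / \<delta>\<bar> < 1"
        using fl by linarith
      then have "\<bar>b y - b z\<bar> / \<delta> < 1" using dpos by (simp add: diff_divide_distrib[symmetric])
      then have "\<bar>b y - b z\<bar> < \<delta>" using dpos by (simp add: divide_less_eq)
      then show False using sep[OF yz(1,2,4)] by (simp add: \<delta>_def)
    qed
    have img: "f ` A \<subseteq> {0..nat \<lfloor>1/\<sigma>\<rfloor>}"
    proof
      fix n assume "n \<in> f ` A"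
      then obtain y where y: "y \<in> A" "n = f y" by auto
      have "b y / \<delta> \<le> a x0 / \<delta>"
        using ble[OF y(1)] nn[OF x0(1)] dpos by (simp add: divide_right_mono)
      also have "a x0 / \<delta> = 1 / \<sigma>" using False s by (simp add: \<delta>_def)
      finally have "\<lfloor>b y / \<delta>\<rfloor> \<le> \<lfloor>1/\<sigma>\<rfloor>" by (rule floor_mono)
      then show "n \<in> {0..nat \<lfloor>1/\<sigma>\<rfloor>}" using y by (simp add: f_def nat_mono)
    qed
    have "card A = card (f ` A)" using inj by (simp add: card_image)
    also have "\<dots> \<le> card {0..nat \<lfloor>1/\<sigma>\<rfloor>}" by (rule card_mono) (use img in auto)
    also have "\<dots> = nat \<lfloor>1/\<sigma>\<rfloor> + 1" by simp
    finally have "real (card A) \<le> real (nat \<lfloor>1/\<sigma>\<rfloor>) + 1" by linarith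
    also have "real (nat \<lfloor>1/\<sigma>\<rfloor>) \<le> 1/\<sigma>" using s
      by (simp add: of_nat_nat)
    finally show ?thesis by simp
  qed
qed

lemma not_shadow:
  assumes "0 \<le> \<sigma>" "l \<le> r" "l' \<le> r'" "\<not> shadows \<sigma> {l..r} {l'..r'}"
  shows "l' < l - \<sigma> * (r' - l') \<or> r' > r + \<sigma> * (r' - l')"
proof (rule ccontr)
  assume h: "\<not> ?thesis"
  have "infdist q {l..r} \<le> \<sigma> * (r' - l')" if q: "q \<in> {l'..r'}" for q
  proof (cases "q < l")
    case True
    have "infdist q {l..r} \<le> dist q l" using assms(2) by (intro infdist_le) auto
    then show ?thesis using True h q by (simp add: dist_real_def)
  next
    case False
    show ?thesis
    proof (cases "q > r")
      case True
      have "infdist q {l..r} \<le> dist q r" using assms(2) by (intro infdist_le) auto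
      then show ?thesis using True h q by (simp add: dist_real_def)
    next
      case False2: False
      then have "infdist q {l..r} = 0" using False by (intro infdist_zero) auto
      moreover have "\<sigma> * (r' - l') \<ge> 0" using assms(1) q by simp
      ultimately show ?thesis using h q by linarith
    qed
  qed
  then show False using assms by (auto simp: shadows_def)
qed

theorem mainTheorem4:
  "\<exists>C::real. \<forall>(\<sigma>::real) (\<I>::real set set) (p::real).
     0 < \<sigma> \<and> \<sigma> \<le> 1 \<and> finite \<I> \<and> (\<forall>I\<in>\<I>. closed_interval I \<and> p \<in> I)
     \<and> exposed \<sigma> \<I> \<longrightarrow> real (card \<I>) \<le> C / \<sigma>\<^sup>2"
proof (rule exI[of _ 4], intro allI impI, elim conjE)
  fix \<sigma> :: real and \<I> :: "real set set" and p :: real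
  assume s: "0 < \<sigma>" "\<sigma> \<le> 1" and fin: "finite \<I>" and iv: "\<forall>I\<in>\<I>. closed_interval I \<and> p \<in> I"
    and ex: "exposed \<sigma> \<I>"
  define a where "a I = p - Inf I" for I :: "real set"
  define b where "b I = Sup I - p" for I :: "real set"
  have rep: "I = {Inf I..Sup I} \<and> Inf I \<le> p \<and> p \<le> Sup I" if "I \<in> \<I>" for I
  proof -
    have ci: "closed_interval I" "p \<in> I" using iv that by auto
    from ci(1) obtain l r where lr: "l \<le> r" "I = {l..r}" unfolding closed_interval_def by blast
    have "Inf I = l" "Sup I = r" unfolding lr(2) using lr(1) by simp_all
    then show ?thesis using lr ci(2) by simp
  qed
  have nn: "0 \<le> a I \<and> 0 \<le> b I" if "I \<in> \<I>" for I
  proof -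
    have "Inf I \<le> p" "p \<le> Sup I" using rep[OF that] by blast+
    then show ?thesis by (simp add: a_def b_def)
  qed
  have pc: "a Y > a X + \<sigma> * (a Y + b Y) \<or> b Y > b X + \<sigma> * (a Y + b Y)"
    if "X \<in> \<I>" "Y \<in> \<I>" "X \<noteq> Y" for X Y
  proof -
    have "\<not> shadows \<sigma> X Y" using ex that unfolding exposed_def by blast
    moreover have "X = {Inf X..Sup X}" "Y = {Inf Y..Sup Y}" using rep[OF that(1)] rep[OF that(2)] by blast+
    ultimately have ns: "\<not> shadows \<sigma> {Inf X..Sup X} {Inf Y..Sup Y}" by metis
    have "Inf X \<le> p" "p \<le> Sup X" "Inf Y \<le> p" "p \<le> Sup Y" using rep[OF that(1)] rep[OF that(2)] by blast+
    then have le: "Inf X \<le> Sup X" "Inf Y \<le> Sup Y" by linarith+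
    have "Inf Y < Inf X - \<sigma> * (Sup Y - Inf Y) \<or> Sup Y > Sup X + \<sigma> * (Sup Y - Inf Y)"
      using s(1) le ns by (intro not_shadow) auto
    then show ?thesis by (auto simp: a_def b_def)
  qed
  define S where "S = {I \<in> \<I>. b I \<le> a I}"
  define T where "T = {I \<in> \<I>. a I \<le> b I}"
  have cS: "real (card S) \<le> 1 / \<sigma> + 1"
  proof (rule key[where a=a and b=b])
    show "finite S" using fin by (simp add: S_def)
    show "0 < \<sigma>" using s by simp
    show "0 \<le> a x \<and> 0 \<le> b x \<and> b x \<le> a x" if "x \<in> S" for x
      using that nn unfolding S_def by blast
    show "a y > a x + \<sigma> * (a y + b y) \<or> b y > b x + \<sigma> * (a y + b y)"
      if "x \<in> S" "y \<in> S" "x \<noteq> y" for x y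
      using pc[of x y] that unfolding S_def by blast
  qed
  have cT: "real (card T) \<le> 1 / \<sigma> + 1"
  proof (rule key[where a=b and b=a])
    show "finite T" using fin by (simp add: T_def)
    show "0 < \<sigma>" using s by simp
    show "0 \<le> b x \<and> 0 \<le> a x \<and> a x \<le> b x" if "x \<in> T" for x
      using that nn unfolding T_def by blast
    show "b y > b x + \<sigma> * (b y + a y) \<or> a y > a x + \<sigma> * (b y + a y)"
      if "x \<in> T" "y \<in> T" "x \<noteq> y" for x y
      using pc[of x y] that unfolding T_def by (simp add: add.commute, blast)
  qed
  have "\<I> = S \<union> T" by (auto simp: S_def T_def)
  then have "card \<I> \<le> card S + card T" by (simp add: card_Un_le)
  then have "real (card \<I>) \<le> 2 / \<sigma> + 2" using cS cT by linarith
  also have "\<dots> \<le> 4 / \<sigma>\<^sup>2"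
  proof -
    have "1 / \<sigma> \<le> 1 / \<sigma>\<^sup>2" using s by (simp add: power2_eq_square divide_simps)
    moreover have "1 \<le> 1 / \<sigma>\<^sup>2" using s by (simp add: power2_eq_square divide_simps mult_le_one)
    ultimately show ?thesis by simp
  qed
  finally show "real (card \<I>) \<le> 4 / \<sigma>\<^sup>2" .
qed

end
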